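(* Fix thresholds $minUtil\in\mathbb{R}$ and $minPro\in\mathbb{R}$. Let $P\subseteq I$ be an itemset and let $y,z\in I\setminus P$ be items with $y$ coming before $z$ in the processing order, each coming after every item of $P$. Set $Y=P\cup\{y\}$ and $Z=P\cup\{z\}$, so $Y\cup Z=P\cup\{y,z\}$. Suppose that either $$\text{(1)}\quad SUM(Y.pu)+SUM(Y.rpu)-\sum_{T_c\in D,\ Y\subseteq T_c,\ Z\not\subseteq T_c}\big(pu(Y,T_c)+rpu(Y,T_c)\big) < minUtil,$$ or $$\text{(2)}\quad SUM(Y.pro)-\sum_{T_c\in D,\ Y\subseteq T_c,\ Z\not\subseteq T_c} pro(Y,T_c) < minPro\cdot|D|.$$ Then neither $Y\cup Z$ nor any descendant of $Y\cup Z$ in the set-enumeration tree is a PHUI.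
   Context: Let $I$ be a finite set of items. An uncertain database $D=\{T_1,\dots,T_n\}$ is a finite collection of transactions with $|D|=n$ and each $T_c\subseteq I$. Each item $i\in T_c$ has a quantity $q(i,T_c)>0$ and a probability $p(i,T_c)\in(0,1]$. Each item $i\in I$ has an external utility $pr(i)\in\mathbb{R}$, which may be negative. Basic quantities: - $u(i,T_c)=pr(i)\,q(i,T_c)$. - For $X\subseteq T_c$: $u(X,T_c)=\sum_{i\in X}u(i,T_c)$ and $p(X,T_c)=\prod_{i\in X}p(i,T_c)$. - $u(X)=\sum_{T_c\in D,\ X\subseteq T_c}u(X,T_c)$ and $Pro(X)=\sum_{T_c\in D,\ X\subseteq T_c}p(X,T_c)$. An itemset $X$ is a potential high-utility itemset (PHUI) if $u(X)\ge minUtil$ and $Pro(X)\ge minPro\cdot|D|$. Fix a total processing order on $I$. The paper sorts items by ascending $RTWU$ and places all items with negative external utility after the positive ones. Here $RTWU(X)=\sum_{T_c\supseteq X}\sum_{i\in T_c,\ pr(i)>0}u(i,T_c)$. The set-enumeration tree has root $\emptyset$. The children of a node $X$ are the sets $X\cup\{i\}$ with $i$ after every item of $X$. Thus the descendants of $X$ are the itemsets $W\supsetneq X$ such that every item of $W\setminus X$ comes after every item of $X$. For $X\subseteq T_c$ define: - $pro(X,T_c)=p(X,T_c)$; - $pu(X,T_c)=\sum_{i\in X,\ pr(i)>0}u(i,T_c)$; - $nu(X,T_c)=\sum_{i\in X,\ pr(i)<0}u(i,T_c)$; - $rpu(X,T_c)=\sum u(i,T_c)$ over $i\in T_c$ with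 $pr(i)>0$ and $i$ after every item of $X$. For $\ast\in\{pro,pu,nu,rpu\}$ let $SUM(X.\ast)=\sum_{T_c\in D,\ X\subseteq T_c}\ast(X,T_c)$. *)

theory Defs
  imports Complex_Main
begin

record 'a udb =
  ntr  :: nat
  trans :: "nat \<Rightarrow> 'a set"
  qty  :: "nat \<Rightarrow> 'a \<Rightarrow> real"
  prb  :: "nat \<Rightarrow> 'a \<Rightarrow> real"

definition wf_db :: "'a set \<Rightarrow> 'a udb \<Rightarrow> bool" where
  "wf_db I D \<longleftrightarrow> finite I \<and>
     (\<forall>c < ntr D. trans D c \<subseteq> I \<and>
        (\<forall>i \<in> trans D c. qty D c i > 0 \<and> prb D c i > 0 \<and> prb D c i \<le> 1))"

definition u_item :: "('a \<Rightarrow> real) \<Rightarrow> 'a udb \<Rightarrow> 'a \<Rightarrow> nat \<Rightarrow> real" where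
  "u_item pr D i c = pr i * qty D c i"

definition u_set :: "('a \<Rightarrow> real) \<Rightarrow> 'a udb \<Rightarrow> 'a set \<Rightarrow> nat \<Rightarrow> real" where
  "u_set pr D X c = (\<Sum>i\<in>X. u_item pr D i c)"

definition p_set :: "'a udb \<Rightarrow> 'a set \<Rightarrow> nat \<Rightarrow> real" where
  "p_set D X c = (\<Prod>i\<in>X. prb D c i)"

definition TX :: "'a udb \<Rightarrow> 'a set \<Rightarrow> nat set" where
  "TX D X = {c. c < ntr D \<and> X \<subseteq> trans D c}"

definition util :: "('a \<Rightarrow> real) \<Rightarrow> 'a udb \<Rightarrow> 'a set \<Rightarrow> real" where
  "util pr D X = (\<Sum>c\<in>TX D X. u_set pr D X c)"

definition Pro :: "'a udb \<Rightarrow> 'a set \<Rightarrow> real" where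
  "Pro D X = (\<Sum>c\<in>TX D X. p_set D X c)"

definition PHUI :: "('a \<Rightarrow> real) \<Rightarrow> 'a udb \<Rightarrow> real \<Rightarrow> real \<Rightarrow> 'a set \<Rightarrow> bool" where
  "PHUI pr D minUtil minPro X \<longleftrightarrow>
     util pr D X \<ge> minUtil \<and> Pro D X \<ge> minPro * real (ntr D)"

text \<open>Processing order given by an injective rank; i is after every item of X.\<close>
definition after :: "('a \<Rightarrow> nat) \<Rightarrow> 'a set \<Rightarrow> 'a \<Rightarrow> bool" where
  "after rk X i \<longleftrightarrow> (\<forall>x\<in>X. rk x < rk i)"

definition pro :: "'a udb \<Rightarrow> 'a set \<Rightarrow> nat \<Rightarrow> real" where
  "pro D X c = p_set D X c"

definition pu :: "('a \<Rightarrow> real) \<Rightarrow> 'a udb \<Rightarrow> 'a set \<Rightarrow> nat \<Rightarrow> real" where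
  "pu pr D X c = (\<Sum>i\<in>{i\<in>X. pr i > 0}. u_item pr D i c)"

definition nu :: "('a \<Rightarrow> real) \<Rightarrow> 'a udb \<Rightarrow> 'a set \<Rightarrow> nat \<Rightarrow> real" where
  "nu pr D X c = (\<Sum>i\<in>{i\<in>X. pr i < 0}. u_item pr D i c)"

definition rpu :: "('a \<Rightarrow> real) \<Rightarrow> ('a \<Rightarrow> nat) \<Rightarrow> 'a udb \<Rightarrow> 'a set \<Rightarrow> nat \<Rightarrow> real" where
  "rpu pr rk D X c = (\<Sum>i\<in>{i\<in>trans D c. pr i > 0 \<and> after rk X i}. u_item pr D i c)"

text \<open>SUM(X.f) = sum of f(X,T_c) over transactions containing X.\<close>
definition SUMX :: "'a udb \<Rightarrow> 'a set \<Rightarrow> ('a set \<Rightarrow> nat \<Rightarrow> real) \<Rightarrow> real" where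
  "SUMX D X f = (\<Sum>c\<in>TX D X. f X c)"

definition descendant :: "('a \<Rightarrow> nat) \<Rightarrow> 'a set \<Rightarrow> 'a set \<Rightarrow> 'a set \<Rightarrow> bool" where
  "descendant rk I X W \<longleftrightarrow> W \<subseteq> I \<and> X \<subset> W \<and> (\<forall>i\<in>W - X. after rk X i)"

end

theory Submission
  imports Defs
begin

lemma sum_split_P:
  assumes "finite A"
  shows "(\<Sum>x\<in>A. f x) = (\<Sum>x\<in>{x\<in>A. P x}. f x) + (\<Sum>x\<in>{x\<in>A. \<not> P x}. f x)"
proof -
  have "A = {x\<in>A. P x} \<union> {x\<in>A. \<not> P x}" by auto
  then have "(\<Sum>x\<in>A. f x) = (\<Sum>x\<in>{x\<in>A. P x} \<union> {x\<in>A. \<not> P x}. f x)" by simp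
  also have "\<dots> = (\<Sum>x\<in>{x\<in>A. P x}. f x) + (\<Sum>x\<in>{x\<in>A. \<not> P x}. f x)"
    by (rule sum.union_disjoint) (use assms in auto)
  finally show ?thesis .
qed

lemma per_c_util:
  assumes fin: "finite (trans D c)" and W: "W \<subseteq> trans D c" and YW: "Y \<subseteq> W"
    and q: "\<forall>i\<in>trans D c. qty D c i > 0"
    and aft: "\<forall>i\<in>W - Y. after rk Y i"
  shows "u_set pr D W c \<le> pu pr D Y c + rpu pr rk D Y c"
proof -
  have fW: "finite W" using fin W finite_subset by blast
  have fY: "finite Y" using fW YW finite_subset by blast
  have "u_set pr D W c = (\<Sum>i\<in>{i\<in>W. pr i > 0}. u_item pr D i c) + (\<Sum>i\<in>{i\<in>W. \<not> pr i > 0}. u_item pr D i c)"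
    unfolding u_set_def using fW by (rule sum_split_P)
  also have "(\<Sum>i\<in>{i\<in>W. \<not> pr i > 0}. u_item pr D i c) \<le> 0"
  proof (rule sum_nonpos)
    fix i assume "i \<in> {i\<in>W. \<not> pr i > 0}"
    then have "pr i \<le> 0" "qty D c i > 0" using q W by auto
    then show "u_item pr D i c \<le> 0" unfolding u_item_def by (simp add: mult_nonpos_nonneg)
  qed
  also have "{i\<in>W. pr i > 0} = {i\<in>Y. pr i > 0} \<union> {i\<in>W - Y. pr i > 0}" using YW by auto
  also have "(\<Sum>i\<in>{i\<in>Y. pr i > 0} \<union> {i\<in>W - Y. pr i > 0}. u_item pr D i c)
      = pu pr D Y c + (\<Sum>i\<in>{i\<in>W - Y. pr i > 0}. u_item pr D i c)"
    unfolding pu_def using fW fY by (subst sum.union_disjoint) auto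
  also have "(\<Sum>i\<in>{i\<in>W - Y. pr i > 0}. u_item pr D i c) \<le> rpu pr rk D Y c"
    unfolding rpu_def
  proof (rule sum_mono2)
    show "finite {i \<in> trans D c. 0 < pr i \<and> after rk Y i}" using fin by simp
    show "{i \<in> W - Y. 0 < pr i} \<subseteq> {i \<in> trans D c. 0 < pr i \<and> after rk Y i}" using W aft by auto
    fix b assume "b \<in> {i \<in> trans D c. 0 < pr i \<and> after rk Y i} - {i \<in> W - Y. 0 < pr i}"
    then have "pr b > 0" "qty D c b > 0" using q by auto
    then show "0 \<le> u_item pr D b c" unfolding u_item_def by simp
  qed
  finally show ?thesis by simp
qed

lemma per_c_pro:
  assumes fin: "finite (trans D c)" and W: "W \<subseteq> trans D c" and YW: "Y \<subseteq> W"
    and p: "\<forall>i\<in>trans D c. prb D c i > 0 \<and> prb D c i \<le> 1"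
  shows "p_set D W c \<le> pro D Y c"
proof -
  have fW: "finite W" using fin W finite_subset by blast
  have "p_set D W c = p_set D Y c * (\<Prod>i\<in>W - Y. prb D c i)"
    unfolding p_set_def using fW YW by (metis prod.subset_diff mult.commute)
  also have "\<dots> \<le> p_set D Y c * 1"
  proof (rule mult_left_mono)
    show "(\<Prod>i\<in>W - Y. prb D c i) \<le> 1"
      by (rule prod_le_1) (use p W in force)+
    show "0 \<le> p_set D Y c" unfolding p_set_def
      by (rule prod_nonneg) (use p W YW in force)
  qed
  finally show ?thesis unfolding pro_def by simp
qed

theorem lemma1:
  fixes I :: "'a set" and D :: "'a udb" and pr :: "'a \<Rightarrow> real" and rk :: "'a \<Rightarrow> nat"
    and minUtil minPro :: real and P Y Z :: "'a set" and y z :: 'a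
  assumes db: "wf_db I D"
    and ord: "inj_on rk I"
    and P: "P \<subseteq> I"
    and y: "y \<in> I - P" and z: "z \<in> I - P"
    and yz: "rk y < rk z"
    and Py: "after rk P y" and Pz: "after rk P z"
    and Y: "Y = insert y P" and Z: "Z = insert z P"
    and cond: "SUMX D Y (pu pr D) + SUMX D Y (rpu pr rk D)
                 - (\<Sum>c\<in>{c\<in>TX D Y. \<not> Z \<subseteq> trans D c}. pu pr D Y c + rpu pr rk D Y c) < minUtil
             \<or> SUMX D Y (pro D)
                 - (\<Sum>c\<in>{c\<in>TX D Y. \<not> Z \<subseteq> trans D c}. pro D Y c) < minPro * real (ntr D)"
  shows "\<not> PHUI pr D minUtil minPro (Y \<union> Z)
         \<and> (\<forall>W. descendant rk I (Y \<union> Z) W \<longrightarrow> \<not> PHUI pr D minUtil minPro W)"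
proof -
  have finI: "finite I" and dbc: "\<And>c. c < ntr D \<Longrightarrow> trans D c \<subseteq> I \<and>
        (\<forall>i \<in> trans D c. qty D c i > 0 \<and> prb D c i > 0 \<and> prb D c i \<le> 1)"
    using db unfolding wf_db_def by auto
  have finT: "finite (TX D X)" for X unfolding TX_def by simp
  have split: "SUMX D Y f - (\<Sum>c\<in>{c\<in>TX D Y. \<not> Z \<subseteq> trans D c}. f Y c) = (\<Sum>c\<in>TX D (Y \<union> Z). f Y c)" for f
  proof -
    have "SUMX D Y f = (\<Sum>c\<in>{c\<in>TX D Y. Z \<subseteq> trans D c}. f Y c) + (\<Sum>c\<in>{c\<in>TX D Y. \<not> Z \<subseteq> trans D c}. f Y c)"
      unfolding SUMX_def using finT by (rule sum_split_P)
    moreover have "{c\<in>TX D Y. Z \<subseteq> trans D c} = TX D (Y \<union> Z)" unfolding TX_def by auto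
    ultimately show ?thesis by simp
  qed
  have c1: "SUMX D Y (pu pr D) + SUMX D Y (rpu pr rk D)
                 - (\<Sum>c\<in>{c\<in>TX D Y. \<not> Z \<subseteq> trans D c}. pu pr D Y c + rpu pr rk D Y c)
       = (\<Sum>c\<in>TX D (Y \<union> Z). pu pr D Y c + rpu pr rk D Y c)"
    using split[of "\<lambda>X c. pu pr D X c + rpu pr rk D X c"] unfolding SUMX_def
    by (simp add: sum.distrib)
  have c2: "SUMX D Y (pro D) - (\<Sum>c\<in>{c\<in>TX D Y. \<not> Z \<subseteq> trans D c}. pro D Y c)
       = (\<Sum>c\<in>TX D (Y \<union> Z). pro D Y c)" using split[of "pro D"] .
  have main: "\<not> PHUI pr D minUtil minPro W"
    if WI: "W \<subseteq> I" and YZW: "Y \<union> Z \<subseteq> W" and aft: "\<forall>i\<in>W - Y. after rk Y i" for W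
  proof -
    have sub: "TX D W \<subseteq> TX D (Y \<union> Z)" using YZW unfolding TX_def by auto
    have u: "util pr D W \<le> (\<Sum>c\<in>TX D (Y \<union> Z). pu pr D Y c + rpu pr rk D Y c)"
    proof -
      have "util pr D W \<le> (\<Sum>c\<in>TX D W. pu pr D Y c + rpu pr rk D Y c)"
        unfolding util_def
      proof (rule sum_mono)
        fix c assume c: "c \<in> TX D W"
        then have "c < ntr D" "W \<subseteq> trans D c" unfolding TX_def by auto
        then show "u_set pr D W c \<le> pu pr D Y c + rpu pr rk D Y c"
          using per_c_util[of D c W Y rk pr] dbc[of c] finI finite_subset YZW aft by blast
      qed
      also have "\<dots> \<le> (\<Sum>c\<in>TX D (Y \<union> Z). pu pr D Y c + rpu pr rk D Y c)"
      proof (rule sum_mono2[OF finT sub])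
        fix c assume "c \<in> TX D (Y \<union> Z) - TX D W"
        then have c: "c < ntr D" "Y \<subseteq> trans D c" unfolding TX_def by auto
        have "0 \<le> pu pr D Y c" unfolding pu_def u_item_def
          by (rule sum_nonneg) (use c dbc[of c] in force)
        moreover have "0 \<le> rpu pr rk D Y c" unfolding rpu_def u_item_def
          by (rule sum_nonneg) (use c dbc[of c] in force)
        ultimately show "0 \<le> pu pr D Y c + rpu pr rk D Y c" by simp
      qed
      finally show ?thesis .
    qed
    have p: "Pro D W \<le> (\<Sum>c\<in>TX D (Y \<union> Z). pro D Y c)"
    proof -
      have "Pro D W \<le> (\<Sum>c\<in>TX D W. pro D Y c)"
        unfolding Pro_def
      proof (rule sum_mono)
        fix c assume c: "c \<in> TX D W"
        then have "c < ntr D" "W \<subseteq> trans D c" unfolding TX_def by auto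
        then show "p_set D W c \<le> pro D Y c"
          using per_c_pro[of D c W Y] dbc[of c] finI finite_subset YZW by blast
      qed
      also have "\<dots> \<le> (\<Sum>c\<in>TX D (Y \<union> Z). pro D Y c)"
      proof (rule sum_mono2[OF finT sub])
        fix c assume "c \<in> TX D (Y \<union> Z) - TX D W"
        then have c: "c < ntr D" "Y \<subseteq> trans D c" unfolding TX_def by auto
        show "0 \<le> pro D Y c" unfolding pro_def p_set_def
          by (rule prod_nonneg) (use c dbc[of c] in force)
      qed
      finally show ?thesis .
    qed
    show ?thesis using cond c1 c2 u p unfolding PHUI_def by linarith
  qed
  have YZI: "Y \<union> Z \<subseteq> I" using Y Z P y z by auto
  have aftZ: "after rk Y z" using Py Pz yz Y unfolding after_def by auto
  show ?thesis
  proof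
    show "\<not> PHUI pr D minUtil minPro (Y \<union> Z)"
      by (rule main[OF YZI order_refl]) (use aftZ Y Z in auto)
    show "\<forall>W. descendant rk I (Y \<union> Z) W \<longrightarrow> \<not> PHUI pr D minUtil minPro W"
    proof (intro allI impI)
      fix W assume d: "descendant rk I (Y \<union> Z) W"
      then have WI: "W \<subseteq> I" and sub: "Y \<union> Z \<subseteq> W" and a: "\<forall>i\<in>W - (Y \<union> Z). after rk (Y \<union> Z) i"
        unfolding descendant_def by auto
      have "\<forall>i\<in>W - Y. after rk Y i"
      proof
        fix i assume i: "i \<in> W - Y"
        show "after rk Y i"
        proof (cases "i = z")
          case True then show ?thesis using aftZ by simp
        next
          case False
          then have "i \<in> W - (Y \<union> Z)" using i Z Y by auto
          then show ?thesis using a unfolding after_def by auto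
        qed
      qed
      then show "\<not> PHUI pr D minUtil minPro W" using main WI sub by blast
    qed
  qed
qed

end
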